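(* Let $n\ge 2$, and let $S$ be a semitransitive subsemigroup of $\mathcal{I}_n\setminus\mathcal{S}_n$ with $|S|\le 2n$, with transitivity blocks $X_1,\dots,X_m$. Then for every idempotent $e\in S$ and every block $X_s$, either $\mathrm{dom}(e)\cap X_s=\varnothing$ or $X_s\subseteq\mathrm{dom}(e)$.
   Context: $\mathcal{I}_n$ denotes the symmetric inverse semigroup of all partial injective maps of $X=\{1,\dots,n\}$ to itself (including the empty map $0$), with maps written on the right and composed left to right. $\mathcal{S}_n$ is the symmetric group on $X$. A semigroup $S$ of partial transformations of $X$ is semitransitive if for all $x,y\in X$ there is $\varphi\in S$ with $x\varphi=y$ or $y\varphi=x$. For $x,y\in X$ write $x\ge y$ if $x\varphi=y$ for some $\varphi\in S$; for semitransitive $S$ this is a total preorder. The transitivity blocks $X_1,\dots,X_m$ are the equivalence classes of this preorder, numbered so that for $x\in X_i$, $y\in X_j$ one has $x\ge y$ iff $i\le j$. *)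

theory Defs
  imports Main
begin

text \<open>Partial maps of X = {1..n} are modelled as maps nat \<Rightarrow> nat option.
  Maps are written on the right and composed left to right:
  x (f g) = (x f) g.\<close>

definition partial_inj :: "nat \<Rightarrow> (nat \<rightharpoonup> nat) \<Rightarrow> bool" where
  "partial_inj n f \<longleftrightarrow> dom f \<subseteq> {1..n} \<and> ran f \<subseteq> {1..n} \<and> inj_on f (dom f)"

definition sym_inv :: "nat \<Rightarrow> (nat \<rightharpoonup> nat) set" where
  "sym_inv n = {f. partial_inj n f}"

definition sym_grp :: "nat \<Rightarrow> (nat \<rightharpoonup> nat) set" where
  "sym_grp n = {f. partial_inj n f \<and> dom f = {1..n} \<and> ran f = {1..n}}"

definition pcomp :: "(nat \<rightharpoonup> nat) \<Rightarrow> (nat \<rightharpoonup> nat) \<Rightarrow> (nat \<rightharpoonup> nat)" where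
  "pcomp f g = g \<circ>\<^sub>m f"

definition is_subsemigroup :: "(nat \<rightharpoonup> nat) set \<Rightarrow> bool" where
  "is_subsemigroup S \<longleftrightarrow> (\<forall>f\<in>S. \<forall>g\<in>S. pcomp f g \<in> S)"

definition semitransitive :: "nat \<Rightarrow> (nat \<rightharpoonup> nat) set \<Rightarrow> bool" where
  "semitransitive n S \<longleftrightarrow>
     (\<forall>x\<in>{1..n}. \<forall>y\<in>{1..n}. \<exists>\<phi>\<in>S. \<phi> x = Some y \<or> \<phi> y = Some x)"

text \<open>x \<ge> y iff x \<phi> = y for some \<phi> in S.\<close>
definition reach :: "(nat \<rightharpoonup> nat) set \<Rightarrow> nat \<Rightarrow> nat \<Rightarrow> bool" where
  "reach S x y \<longleftrightarrow> (\<exists>\<phi>\<in>S. \<phi> x = Some y)"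

definition trans_blocks :: "nat \<Rightarrow> (nat \<rightharpoonup> nat) set \<Rightarrow> nat set set" where
  "trans_blocks n S = {{y\<in>{1..n}. reach S x y \<and> reach S y x} | x. x \<in> {1..n}}"

definition idempotent :: "(nat \<rightharpoonup> nat) \<Rightarrow> bool" where
  "idempotent e \<longleftrightarrow> pcomp e e = e"

end

theory Submission
  imports Defs
begin


definition splitp :: "(nat \<rightharpoonup> nat) set \<Rightarrow> (nat \<rightharpoonup> nat) \<Rightarrow> nat \<Rightarrow> nat \<Rightarrow> bool" where
  "splitp S e p q \<longleftrightarrow> e \<in> S \<and> idempotent e \<and> e p \<noteq> None \<and> e q = None \<and> reach S p q \<and> reach S q p"


lemma pcomp_apply: "pcomp f g x = (case f x of None \<Rightarrow> None | Some y \<Rightarrow> g y)"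
  by (simp add: pcomp_def map_comp_def)

lemma pcomp_assoc: "pcomp (pcomp f g) h = pcomp f (pcomp g h)"
  by (rule ext) (simp add: pcomp_apply split: option.splits)

fun pw :: "(nat \<rightharpoonup> nat) \<Rightarrow> nat \<Rightarrow> (nat \<rightharpoonup> nat)" where
  "pw f 0 = f"
| "pw f (Suc k) = pcomp f (pw f k)"

lemma pw_add: "pw f (a + b + 1) = pcomp (pw f a) (pw f b)"
proof (induction a)
  case 0 then show ?case by simp
next
  case (Suc a)
  have "pw f (Suc a + b + 1) = pcomp f (pw f (a + b + 1))" by simp
  also have "\<dots> = pcomp (pcomp f (pw f a)) (pw f b)" using Suc by (simp add: pcomp_assoc)
  finally show ?case by simp
qed

lemma pw_fix: "f p = Some p \<Longrightarrow> pw f k p = Some p"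
  by (induction k) (auto simp: pcomp_apply)

lemma pw_dom: "pw f k p \<noteq> None \<Longrightarrow> f p \<noteq> None"
  by (induction k) (auto simp: pcomp_apply split: option.splits)

lemma pw_ran: "pw f k p = Some q \<Longrightarrow> \<exists>p'. f p' = Some q"
  by (induction k arbitrary: p) (auto simp: pcomp_apply split: option.splits)

lemma finite_sym_inv: "finite (sym_inv n)"
proof -
  have "sym_inv n \<subseteq> (\<Union>A\<in>Pow {1..n}. {m. dom m = A \<and> ran m \<subseteq> {1..n}})"
    by (auto simp: sym_inv_def partial_inj_def)
  moreover have "finite (\<Union>A\<in>Pow {1..n}. {m. dom m = A \<and> ran m \<subseteq> {1..n}})"
  proof (intro finite_UN_I)
    show "finite (Pow {1..n})" by simp
    fix A assume "A \<in> Pow {1..n}"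
    hence "finite A" using finite_subset by blast
    then show "finite {m. dom m = A \<and> ran m \<subseteq> {1..n}}"
      by (intro finite_set_of_finite_maps) auto
  qed
  ultimately show ?thesis by (rule finite_subset)
qed

lemma idem_pcomp: "idempotent f \<Longrightarrow> f p = Some q \<Longrightarrow> f q = Some q"
  unfolding idempotent_def
  by (metis (no_types, lifting) option.simps(5) pcomp_apply)

context
  fixes n :: nat and S :: "(nat \<rightharpoonup> nat) set"
  assumes Ssub: "S \<subseteq> sym_inv n" and Ssg: "is_subsemigroup S" and Sst: "semitransitive n S"
begin

lemma finS: "finite S" using Ssub finite_sym_inv finite_subset by blast

lemma pc_in: "f \<in> S \<Longrightarrow> g \<in> S \<Longrightarrow> pcomp f g \<in> S"
  using Ssg by (auto simp: is_subsemigroup_def)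

lemma inj_S: "f \<in> S \<Longrightarrow> f p = Some q \<Longrightarrow> f p' = Some q \<Longrightarrow> p = p'"
  using Ssub unfolding sym_inv_def partial_inj_def inj_on_def by (auto simp: dom_def)

lemma ran_S: "f \<in> S \<Longrightarrow> f p = Some q \<Longrightarrow> q \<in> {1..n}"
proof -
  assume a: "f \<in> S" "f p = Some q"
  hence "q \<in> ran f" by (simp add: ranI)
  moreover have "ran f \<subseteq> {1..n}" using a Ssub unfolding sym_inv_def partial_inj_def by blast
  ultimately show ?thesis by blast
qed

lemma dom_S: "f \<in> S \<Longrightarrow> f p = Some q \<Longrightarrow> p \<in> {1..n}"
proof -
  assume a: "f \<in> S" "f p = Some q"
  hence "p \<in> dom f" by blast
  moreover have "dom f \<subseteq> {1..n}" using a Ssub unfolding sym_inv_def partial_inj_def by blast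
  ultimately show ?thesis by blast
qed

lemma reach_trans: "reach S a b \<Longrightarrow> reach S b c \<Longrightarrow> reach S a c"
  unfolding reach_def by (metis pc_in pcomp_apply option.simps(5))

lemma reach_refl: "a \<in> {1..n} \<Longrightarrow> reach S a a"
  using Sst unfolding semitransitive_def reach_def by blast

lemma reach_total: "a \<in> {1..n} \<Longrightarrow> b \<in> {1..n} \<Longrightarrow> reach S a b \<or> reach S b a"
  using Sst unfolding semitransitive_def reach_def by blast

lemma reach_ran: "reach S a b \<Longrightarrow> b \<in> {1..n}"
  unfolding reach_def using ran_S by blast

lemma reach_dom: "reach S a b \<Longrightarrow> a \<in> {1..n}"
  unfolding reach_def using dom_S by blast

lemma idem_fix: "f \<in> S \<Longrightarrow> idempotent f \<Longrightarrow> f p = Some q \<Longrightarrow> q = p"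
  using idem_pcomp inj_S by metis

lemma pw_in: "f \<in> S \<Longrightarrow> pw f k \<in> S"
  by (induction k) (auto intro: pc_in)

lemma pw_periodic:
  assumes "pw f i = pw f j" "i < j"
  shows "t \<ge> i + 1 \<Longrightarrow> pw f (t + q * (j - i)) = pw f t"
proof (induction q)
  case 0 then show ?case by simp
next
  case (Suc q)
  define k where "k = t + q * (j - i) - i - 1"
  have t1: "t + q * (j - i) = k + i + 1" using Suc.prems k_def by simp
  have t2: "t + Suc q * (j - i) = k + j + 1" using t1 assms(2) by simp
  have "pw f (k + j + 1) = pcomp (pw f k) (pw f j)" by (rule pw_add)
  also have "\<dots> = pcomp (pw f k) (pw f i)" using assms(1) by simp
  also have "\<dots> = pw f (k + i + 1)" by (rule pw_add[symmetric])
  finally have "pw f (k + j + 1) = pw f (k + i + 1)" .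
  then have "pw f (t + Suc q * (j - i)) = pw f (t + q * (j - i))" by (simp only: t1 t2)
  then show ?case using Suc by simp
qed

lemma idem_power: assumes "f \<in> S" shows "\<exists>m. idempotent (pw f m)"
proof -
  have "range (pw f) \<subseteq> S" using pw_in assms by blast
  hence "finite (range (pw f))" using finS finite_subset by blast
  hence "\<not> inj (pw f)" using finite_imageD infinite_UNIV_nat by blast
  then obtain i j where ij: "i \<noteq> j" "pw f i = pw f j" unfolding inj_def by blast
  obtain i j where ij: "i < j" "pw f i = pw f j"
    using ij by (metis linorder_neqE_nat)
  define p where "p = j - i"
  have p1: "p \<ge> 1" using ij p_def by simp
  define m where "m = (i + 2) * p - 1"
  have big: "(i + 2) * 1 \<le> (i + 2) * p" using p1 by (rule mult_le_mono2)
  have m1: "m \<ge> i + 1" using big m_def by simp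
  have m2: "m + m + 1 = m + (i + 2) * p" using m_def big by simp
  have "pcomp (pw f m) (pw f m) = pw f (m + (i + 2) * p)" using pw_add m2 by metis
  also have "\<dots> = pw f m" using pw_periodic[OF ij(2) ij(1) m1] p_def by blast
  finally show ?thesis unfolding idempotent_def by blast
qed

lemma pw_back:
  assumes "f \<in> S" "idempotent (pw f k)" "pw f k w \<noteq> None"
  shows "\<exists>v. f w = Some v \<and> reach S v w"
proof -
  obtain w' where w': "pw f k w = Some w'" using assms(3) by blast
  have "w' = w" using idem_fix[OF pw_in[OF assms(1)] assms(2) w'] .
  show ?thesis
  proof (cases k)
    case 0 then show ?thesis using w' \<open>w' = w\<close> assms(1) unfolding reach_def by auto
  next
    case (Suc k')
    then obtain v where "f w = Some v" "pw f k' v = Some w"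
      using w' \<open>w' = w\<close> by (auto simp: pcomp_apply split: option.splits)
    then show ?thesis using pw_in[OF assms(1)] unfolding reach_def by blast
  qed
qed

lemma no_split:
  assumes card: "card S \<le> 2 * n" and sp0: "splitp S e0 p0 q0"
  shows False
proof -
  obtain e where e: "\<exists>p q. splitp S e p q"
    and emin: "\<forall>e'. (\<exists>p q. splitp S e' p q) \<longrightarrow> card (dom e) \<le> card (dom e')"
    using ex_has_least_nat[of "\<lambda>e. \<exists>p q. splitp S e p q" e0 "\<lambda>e. card (dom e)"] sp0 by blast
  define Lf where "Lf = (\<lambda>p. {z. reach S p z})"
  have Lf_sub: "Lf p \<subseteq> {1..n}" for p using reach_ran unfolding Lf_def by blast
  have Lf_fin: "finite (Lf p)" for p using Lf_sub finite_subset by blast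
  obtain pq where pq: "splitp S e (fst pq) (snd pq)"
    and pqmax: "\<forall>pq'. splitp S e (fst pq') (snd pq') \<longrightarrow> n - card (Lf (fst pq)) \<le> n - card (Lf (fst pq'))"
    using ex_has_least_nat[of "\<lambda>pq. splitp S e (fst pq) (snd pq)" _ "\<lambda>pq. n - card (Lf (fst pq))"] e
    by (metis fst_conv snd_conv)
  define x where "x = fst pq"
  define y where "y = snd pq"
  have xy: "splitp S e x y" using pq x_def y_def by simp
  have xymax: "\<And>p q. splitp S e p q \<Longrightarrow> n - card (Lf x) \<le> n - card (Lf p)"
    using pqmax x_def by (metis fst_conv snd_conv)
  have bigger: "\<And>v w. reach S v x \<Longrightarrow> reach S v w \<Longrightarrow> \<not> reach S x w \<Longrightarrow> n - card (Lf v) < n - card (Lf x)"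
  proof -
    fix v w assume a: "reach S v x" "reach S v w" "\<not> reach S x w"
    have "Lf x \<subseteq> Lf v" using a(1) reach_trans unfolding Lf_def by blast
    moreover have "w \<in> Lf v - Lf x" using a unfolding Lf_def by blast
    ultimately have "Lf x \<subset> Lf v" by blast
    hence "card (Lf x) < card (Lf v)" using Lf_fin psubset_card_mono by blast
    moreover have "card (Lf v) \<le> n" using card_mono[OF _ Lf_sub] by simp
    ultimately show "n - card (Lf v) < n - card (Lf x)" by simp
  qed
  have eS: "e \<in> S" and eid: "idempotent e" and ex: "e x \<noteq> None" and ey: "e y = None"
    and rxy: "reach S x y" and ryx: "reach S y x"
    using xy unfolding splitp_def by auto
  define D where "D = dom e"
  have efix: "\<And>w v. e w = Some v \<Longrightarrow> v = w" using idem_fix[OF eS eid] by blast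
  have eD: "\<And>w. w \<in> D \<Longrightarrow> e w = Some w" using efix D_def by blast
  have eND: "\<And>w. w \<notin> D \<Longrightarrow> e w = None" using D_def by blast
  have xD: "x \<in> D" and yD: "y \<notin> D" using ex ey D_def by auto
  have Dsub: "D \<subseteq> {1..n}" using dom_S[OF eS] D_def by blast
  have finD: "finite D" using Dsub finite_subset by blast
  obtain \<beta> where \<beta>: "\<beta> \<in> S" "\<beta> x = Some y" using rxy unfolding reach_def by blast
  obtain \<alpha> where \<alpha>: "\<alpha> \<in> S" "\<alpha> y = Some x" using ryx unfolding reach_def by blast
  define \<rho> where "\<rho> = pcomp e \<beta>"
  define \<sigma> where "\<sigma> = pcomp \<alpha> e"
  define \<pi> where "\<pi> = pcomp \<rho> \<sigma>"
  define \<tau> where "\<tau> = pcomp \<sigma> \<rho>"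
  have \<rho>S: "\<rho> \<in> S" and \<sigma>S: "\<sigma> \<in> S" and \<pi>S: "\<pi> \<in> S" and \<tau>S: "\<tau> \<in> S"
    using pc_in eS \<alpha> \<beta> unfolding \<rho>_def \<sigma>_def \<pi>_def \<tau>_def by blast+
  have \<rho>x: "\<rho> x = Some y" using \<beta> eD xD unfolding \<rho>_def by (simp add: pcomp_apply)
  have \<sigma>y: "\<sigma> y = Some x" using \<alpha> eD xD unfolding \<sigma>_def by (simp add: pcomp_apply)
  have \<pi>x: "\<pi> x = Some x" using \<rho>x \<sigma>y unfolding \<pi>_def by (simp add: pcomp_apply)
  have \<tau>y: "\<tau> y = Some y" using \<rho>x \<sigma>y unfolding \<tau>_def by (simp add: pcomp_apply)
  have dom\<rho>: "\<And>w. \<rho> w \<noteq> None \<Longrightarrow> w \<in> D" using eND unfolding \<rho>_def by (force simp: pcomp_apply)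
  have ran\<sigma>: "\<And>w v. \<sigma> w = Some v \<Longrightarrow> v \<in> D"
    using efix unfolding \<sigma>_def D_def by (force simp: pcomp_apply split: option.splits)
  have \<pi>_apply: "\<And>w. \<pi> w = (case \<rho> w of None \<Rightarrow> None | Some v \<Rightarrow> \<sigma> v)"
    unfolding \<pi>_def by (simp add: pcomp_apply)
  have \<tau>_apply: "\<And>w. \<tau> w = (case \<sigma> w of None \<Rightarrow> None | Some v \<Rightarrow> \<rho> v)"
    unfolding \<tau>_def by (simp add: pcomp_apply)
  obtain m where fid: "idempotent (pw \<pi> m)" using idem_power[OF \<pi>S] by blast
  define f where "f = pw \<pi> m"
  have fS: "f \<in> S" using pw_in[OF \<pi>S] f_def by blast
  have domf: "dom f \<subseteq> dom \<rho>"
    using pw_dom[of \<pi> m] \<pi>_apply unfolding f_def by (force split: option.splits)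
  have dom\<rho>D: "dom \<rho> \<subseteq> D" using dom\<rho> by blast
  have fx: "f x = Some x" using pw_fix[of \<pi> x m, OF \<pi>x] f_def by simp
  have "splitp S f x y"
    unfolding splitp_def using fS fid fx domf dom\<rho>D yD rxy ryx f_def by blast
  hence "card D \<le> card (dom f)" using emin D_def by blast
  hence "dom f = D" using domf dom\<rho>D finD by (metis card_seteq order_trans)
  hence domD: "dom \<rho> = D" using domf dom\<rho>D by blast
  have back\<rho>: "\<And>w. w \<in> D \<Longrightarrow> \<exists>v. \<rho> w = Some v \<and> reach S v w \<and> reach S w v"
  proof -
    fix w assume wD: "w \<in> D"
    hence "f w \<noteq> None" using \<open>dom f = D\<close> by blast
    then obtain u where u: "\<pi> w = Some u" "reach S u w" using pw_back[OF \<pi>S fid] f_def by blast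
    then obtain v where v: "\<rho> w = Some v" "\<sigma> v = Some u" using \<pi>_apply by (auto split: option.splits)
    have "reach S v u" using v(2) \<sigma>S unfolding reach_def by blast
    hence "reach S v w" using u(2) reach_trans by blast
    moreover have "reach S w v" using v(1) \<rho>S unfolding reach_def by blast
    ultimately show "\<exists>v. \<rho> w = Some v \<and> reach S v w \<and> reach S w v" using v(1) by blast
  qed
  define g where "g = (\<lambda>w. the (\<rho> w))"
  have g\<rho>: "\<And>w. w \<in> D \<Longrightarrow> \<rho> w = Some (g w)" using domD g_def by auto
  have injg: "inj_on g D"
  proof (rule inj_onI)
    fix a b assume "a \<in> D" "b \<in> D" "g a = g b"
    then show "a = b" using g\<rho> inj_S[OF \<rho>S] by metis
  qed
  define R where "R = g ` D"
  have R_ran: "\<And>v. v \<in> R \<longleftrightarrow> (\<exists>w. \<rho> w = Some v)"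
    using g\<rho> domD unfolding R_def by (metis domI imageE image_eqI option.inject)
  have cardR: "card R = card D" using injg R_def card_image by blast
  have finR: "finite R" using finD R_def by blast
  have yR: "y \<in> R" using R_ran \<rho>x by blast
  obtain m' where hid: "idempotent (pw \<tau> m')" using idem_power[OF \<tau>S] by blast
  define h where "h = pw \<tau> m'"
  define H where "H = dom h"
  have hS: "h \<in> S" using pw_in[OF \<tau>S] h_def by blast
  have hfix: "\<And>w v. h w = Some v \<Longrightarrow> v = w" using idem_fix[OF hS] hid h_def by blast
  have hH: "\<And>w. w \<in> H \<Longrightarrow> h w = Some w" using hfix H_def by blast
  have hNH: "\<And>w. w \<notin> H \<Longrightarrow> h w = None" using H_def by blast
  have hy: "h y = Some y" using pw_fix[of \<tau> y m', OF \<tau>y] h_def by simp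
  have yH: "y \<in> H" using hy H_def by blast
  have HR: "H \<subseteq> R"
  proof
    fix w assume "w \<in> H"
    hence "h w = Some w" using hH by blast
    then obtain p' where "\<tau> p' = Some w" using pw_ran h_def by blast
    then obtain v where "\<rho> v = Some w" using \<tau>_apply by (auto split: option.splits)
    then show "w \<in> R" using R_ran by blast
  qed
  define \<epsilon> where "\<epsilon> = pcomp e h"
  have \<epsilon>S: "\<epsilon> \<in> S" using pc_in eS hS \<epsilon>_def by blast
  have \<epsilon>_apply: "\<And>w. \<epsilon> w = (if w \<in> D \<and> w \<in> H then Some w else None)"
  proof -
    fix w show "\<epsilon> w = (if w \<in> D \<and> w \<in> H then Some w else None)"
      unfolding \<epsilon>_def pcomp_apply
      by (cases "w \<in> D"; cases "w \<in> H") (simp_all add: eD eND hH hNH)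
  qed
  have \<epsilon>id: "idempotent \<epsilon>"
    unfolding idempotent_def by (rule ext) (simp add: pcomp_apply \<epsilon>_apply)
  have \<epsilon>y: "\<epsilon> y = None" using \<epsilon>_apply yD by simp
  have xH: "x \<notin> H"
  proof
    assume "x \<in> H"
    hence "\<epsilon> x \<noteq> None" using \<epsilon>_apply xD by simp
    hence "splitp S \<epsilon> x y" unfolding splitp_def using \<epsilon>S \<epsilon>id \<epsilon>y rxy ryx by blast
    hence "card D \<le> card (dom \<epsilon>)" using emin D_def by blast
    moreover have "dom \<epsilon> = D \<inter> H" using \<epsilon>_apply by (auto simp: dom_def)
    ultimately have "D \<inter> H = D" using finD by (metis card_seteq inf_le1)
    hence "D \<subseteq> R" using HR by blast
    hence "D = R" using card_seteq[OF finR] cardR by simp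
    thus False using yR yD by blast
  qed
  have \<epsilon>x: "\<epsilon> x = None" using \<epsilon>_apply xH by simp
  have "splitp S h y x" unfolding splitp_def using hS hid h_def hy xH hNH rxy ryx by auto
  hence "card D \<le> card H" using emin H_def D_def by blast
  hence HR_eq: "H = R" using card_seteq[OF finR HR] cardR by simp
  define L where "L = Lf x"
  define U where "U = {1..n} - L"
  have Usub: "\<And>u. u \<in> U \<Longrightarrow> u \<in> {1..n} \<and> \<not> reach S x u \<and> reach S u x"
    using reach_total[of x] reach_dom[OF rxy] unfolding U_def L_def Lf_def by blast
  have UDH: "\<And>u. u \<in> U \<Longrightarrow> (u \<in> D \<longleftrightarrow> u \<in> H)"
  proof -
    fix u assume uU: "u \<in> U"
    have ru: "reach S u u" using reach_refl Usub[OF uU] by blast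
    show "u \<in> D \<longleftrightarrow> u \<in> H"
    proof
      assume uD: "u \<in> D"
      define K where "K = {w. reach S u w \<and> reach S w u}"
      have KD: "K \<subseteq> D"
      proof
        fix w assume wK: "w \<in> K"
        show "w \<in> D"
        proof (rule ccontr)
          assume "w \<notin> D"
          hence "splitp S e u w" unfolding splitp_def using eS eid uD eD eND wK K_def by auto
          hence "n - card (Lf x) \<le> n - card (Lf u)" using xymax by blast
          moreover have "n - card (Lf u) < n - card (Lf x)" using bigger[of u u] Usub[OF uU] ru by blast
          ultimately show False by simp
        qed
      qed
      have finK: "finite K" using KD finD finite_subset by blast
      have gK: "g ` K \<subseteq> K"
      proof
        fix v assume "v \<in> g ` K"
        then obtain w where w: "w \<in> K" "v = g w" by blast
        obtain v' where v': "\<rho> w = Some v'" "reach S v' w" "reach S w v'" using back\<rho> KD w(1) by blast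
        have "v' = v" using v'(1) g\<rho> KD w by fastforce
        then show "v \<in> K" using v' w(1) reach_trans unfolding K_def by blast
      qed
      have "g ` K = K" using endo_inj_surj[OF finK gK] injg KD inj_on_subset by blast
      moreover have "u \<in> K" using ru K_def by blast
      ultimately obtain w where "w \<in> K" "u = g w" by blast
      hence "\<rho> w = Some u" using g\<rho> KD by blast
      thus "u \<in> H" using R_ran HR_eq by blast
    next
      assume uH: "u \<in> H"
      show "u \<in> D"
      proof (rule ccontr)
        assume uD: "u \<notin> D"
        have "h u \<noteq> None" using uH hH by simp
        then obtain t where t: "\<tau> u = Some t" "reach S t u" using pw_back[OF \<tau>S] hid h_def by blast
        then obtain v where v: "\<sigma> u = Some v" "\<rho> v = Some t" using \<tau>_apply by (auto split: option.splits)
        have vD: "v \<in> D" using ran\<sigma> v(1) by blast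
        have ruv: "reach S u v" using v(1) \<sigma>S reach_def by blast
        have rvu: "reach S v u" using v(2) \<rho>S t(2) reach_trans reach_def by blast
        have "splitp S e v u" unfolding splitp_def using eS eid vD eD uD eND ruv rvu by auto
        hence "n - card (Lf x) \<le> n - card (Lf v)" using xymax by blast
        moreover have "n - card (Lf v) < n - card (Lf x)"
          using bigger[of v u] Usub[OF uU] rvu reach_trans by blast
        ultimately show False by simp
      qed
    qed
  qed
  have Lsub: "L \<subseteq> {1..n}" using Lf_sub L_def by blast
  have finL: "finite L" using Lf_fin L_def by blast
  have finU: "finite U" using U_def by simp
  have xL: "x \<in> L" using reach_refl reach_dom[OF rxy] L_def Lf_def by blast
  have yL: "y \<in> L" using rxy L_def Lf_def by blast
  have notL: "\<And>u. u \<in> U \<Longrightarrow> u \<notin> L" using U_def by blast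
  define A where "A = (\<lambda>z. SOME \<phi>. \<phi> \<in> S \<and> \<phi> x = Some z)"
  have A: "\<And>z. z \<in> L \<Longrightarrow> A z \<in> S \<and> A z x = Some z"
  proof -
    fix z assume "z \<in> L"
    hence "\<exists>\<phi>. \<phi> \<in> S \<and> \<phi> x = Some z" unfolding L_def Lf_def reach_def by blast
    thus "A z \<in> S \<and> A z x = Some z" unfolding A_def by (rule someI_ex)
  qed
  define B where "B = (\<lambda>z. SOME \<phi>. \<phi> \<in> S \<and> \<phi> y = Some z)"
  have B: "\<And>z. z \<in> L \<Longrightarrow> B z \<in> S \<and> B z y = Some z"
  proof -
    fix z assume "z \<in> L"
    hence "reach S y z" using ryx reach_trans unfolding L_def Lf_def by blast
    hence "\<exists>\<phi>. \<phi> \<in> S \<and> \<phi> y = Some z" unfolding reach_def by blast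
    thus "B z \<in> S \<and> B z y = Some z" unfolding B_def by (rule someI_ex)
  qed
  define Cx where "Cx = (\<lambda>u. SOME \<phi>. \<phi> \<in> S \<and> \<phi> u = Some x)"
  have Cx: "\<And>u. u \<in> U \<Longrightarrow> Cx u \<in> S \<and> Cx u u = Some x"
  proof -
    fix u assume "u \<in> U"
    hence "\<exists>\<phi>. \<phi> \<in> S \<and> \<phi> u = Some x" using Usub unfolding reach_def by blast
    thus "Cx u \<in> S \<and> Cx u u = Some x" unfolding Cx_def by (rule someI_ex)
  qed
  define Cy where "Cy = (\<lambda>u. SOME \<phi>. \<phi> \<in> S \<and> \<phi> u = Some y)"
  have Cy: "\<And>u. u \<in> U \<Longrightarrow> Cy u \<in> S \<and> Cy u u = Some y"
  proof -
    fix u assume "u \<in> U"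
    hence "reach S u y" using Usub rxy reach_trans by blast
    hence "\<exists>\<phi>. \<phi> \<in> S \<and> \<phi> u = Some y" unfolding reach_def by blast
    thus "Cy u \<in> S \<and> Cy u u = Some y" unfolding Cy_def by (rule someI_ex)
  qed
  define a where "a = (\<lambda>z. pcomp e (A z))"
  define b where "b = (\<lambda>z. pcomp h (B z))"
  define c where "c = (\<lambda>u. if u \<in> D then pcomp \<epsilon> (pcomp (Cx u) e) else pcomp (Cx u) e)"
  define d where "d = (\<lambda>u. if u \<in> D then pcomp \<epsilon> (pcomp (Cy u) h) else pcomp (Cy u) h)"
  have aS: "\<And>z. z \<in> L \<Longrightarrow> a z \<in> S" using A pc_in eS a_def by blast
  have bS: "\<And>z. z \<in> L \<Longrightarrow> b z \<in> S" using B pc_in hS b_def by blast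
  have cS: "\<And>u. u \<in> U \<Longrightarrow> c u \<in> S" using Cx pc_in eS \<epsilon>S c_def by auto
  have dS: "\<And>u. u \<in> U \<Longrightarrow> d u \<in> S" using Cy pc_in hS \<epsilon>S d_def by auto
  have ax: "\<And>z. z \<in> L \<Longrightarrow> a z x = Some z" using A eD xD a_def by (simp add: pcomp_apply)
  have by': "\<And>z. z \<in> L \<Longrightarrow> b z y = Some z" using B hH yH b_def by (simp add: pcomp_apply)
  have adom: "\<And>z w. a z w \<noteq> None \<Longrightarrow> w \<in> D" using eND a_def by (force simp: pcomp_apply)
  have bdom: "\<And>z w. b z w \<noteq> None \<Longrightarrow> w \<in> H" using hNH b_def by (force simp: pcomp_apply)
  have cu: "\<And>u. u \<in> U \<Longrightarrow> c u u = Some x"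
    using Cx eD xD UDH \<epsilon>_apply c_def by (simp add: pcomp_apply)
  have du: "\<And>u. u \<in> U \<Longrightarrow> d u u = Some y"
    using Cy hH yH UDH \<epsilon>_apply d_def by (simp add: pcomp_apply)
  have cran: "\<And>u w v. c u w = Some v \<Longrightarrow> v \<in> D"
    using efix D_def unfolding c_def by (force simp: pcomp_apply split: option.splits if_splits)
  have dran: "\<And>u w v. d u w = Some v \<Longrightarrow> v \<in> H"
    using hfix H_def unfolding d_def by (force simp: pcomp_apply split: option.splits if_splits)
  have cdom: "\<And>u w. u \<in> D \<Longrightarrow> c u w \<noteq> None \<Longrightarrow> w \<in> D \<and> w \<in> H"
    using \<epsilon>_apply unfolding c_def by (force simp: pcomp_apply split: if_splits)
  have ddom: "\<And>u w. u \<in> D \<Longrightarrow> d u w \<noteq> None \<Longrightarrow> w \<in> D \<and> w \<in> H"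
    using \<epsilon>_apply unfolding d_def by (force simp: pcomp_apply split: if_splits)
  have inja: "inj_on a L"
  proof (rule inj_onI)
    fix z1 z2 assume "z1 \<in> L" "z2 \<in> L" "a z1 = a z2"
    then show "z1 = z2" using ax by (metis option.inject)
  qed
  have injb: "inj_on b L"
  proof (rule inj_onI)
    fix z1 z2 assume "z1 \<in> L" "z2 \<in> L" "b z1 = b z2"
    then show "z1 = z2" using by' by (metis option.inject)
  qed
  have injc: "inj_on c U"
  proof (rule inj_onI)
    fix u1 u2 assume "u1 \<in> U" "u2 \<in> U" "c u1 = c u2"
    then show "u1 = u2" using cu inj_S cS by metis
  qed
  have injd: "inj_on d U"
  proof (rule inj_onI)
    fix u1 u2 assume "u1 \<in> U" "u2 \<in> U" "d u1 = d u2"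
    then show "u1 = u2" using du inj_S dS by metis
  qed
  have dis1: "a ` L \<inter> b ` L = {}"
  proof (rule ccontr)
    assume "a ` L \<inter> b ` L \<noteq> {}"
    then obtain z z' where "z \<in> L" "z' \<in> L" "a z = b z'" by blast
    then have "a z y \<noteq> None" using by' by simp
    then show False using adom yD by blast
  qed
  have dis2: "c ` U \<inter> d ` U = {}"
  proof (rule ccontr)
    assume "c ` U \<inter> d ` U \<noteq> {}"
    then obtain u u' where "u \<in> U" "u' \<in> U" "c u = d u'" by blast
    then have "c u u' = Some y" using du by simp
    then show False using cran yD by blast
  qed
  have dis3: "(a ` L \<union> b ` L) \<inter> (c ` U \<union> d ` U) = {}"
  proof (rule ccontr)
    assume "(a ` L \<union> b ` L) \<inter> (c ` U \<union> d ` U) \<noteq> {}"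
    then obtain \<phi> where \<phi>1: "\<phi> \<in> a ` L \<union> b ` L" and \<phi>2: "\<phi> \<in> c ` U \<union> d ` U" by blast
    from \<phi>2 obtain u where uU: "u \<in> U" and \<phi>u: "\<phi> u \<noteq> None"
      and \<phi>dom: "\<forall>w. u \<in> D \<longrightarrow> \<phi> w \<noteq> None \<longrightarrow> w \<in> D \<and> w \<in> H"
      using cu du cdom ddom by blast
    show False
    proof (cases "u \<in> D")
      case True
      from \<phi>1 have "\<phi> x \<noteq> None \<or> \<phi> y \<noteq> None" using ax by' by auto
      then show False using \<phi>dom True xH yD by blast
    next
      case False
      hence "u \<notin> H" using UDH uU by blast
      from \<phi>1 have "u \<in> D \<or> u \<in> H" using adom bdom \<phi>u by blast
      then show False using False \<open>u \<notin> H\<close> by blast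
    qed
  qed
  have \<epsilon>notin: "\<epsilon> \<notin> a ` L \<union> b ` L \<union> (c ` U \<union> d ` U)"
  proof
    assume "\<epsilon> \<in> a ` L \<union> b ` L \<union> (c ` U \<union> d ` U)"
    then consider (a) z where "z \<in> L" "\<epsilon> = a z" | (b) z where "z \<in> L" "\<epsilon> = b z"
      | (c) u where "u \<in> U" "\<epsilon> = c u" | (d) u where "u \<in> U" "\<epsilon> = d u" by blast
    then show False
    proof cases
      case a then show False using ax \<epsilon>x by simp
    next
      case b then show False using by' \<epsilon>y by simp
    next
      case c
      then have "\<epsilon> u = Some x" using cu by simp
      then have "x = u" using \<epsilon>_apply by (simp split: if_splits)
      then show False using c notL xL by blast
    next
      case d
      then have "\<epsilon> u = Some y" using du by simp
      then have "y = u" using \<epsilon>_apply by (simp split: if_splits)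
      then show False using d notL yL by blast
    qed
  qed
  have c1: "card (a ` L \<union> b ` L) = card L + card L"
    using card_Un_disjoint[OF _ _ dis1] finL card_image[OF inja] card_image[OF injb] by simp
  have c2: "card (c ` U \<union> d ` U) = card U + card U"
    using card_Un_disjoint[OF _ _ dis2] finU card_image[OF injc] card_image[OF injd] by simp
  have c3: "card (a ` L \<union> b ` L \<union> (c ` U \<union> d ` U)) = 2 * (card L + card U)"
    using card_Un_disjoint[OF _ _ dis3] finL finU c1 c2 by simp
  have cLU: "card L + card U = n"
    using card_Diff_subset[OF finL Lsub] card_mono[OF _ Lsub] U_def by simp
  define Fam where "Fam = insert \<epsilon> (a ` L \<union> b ` L \<union> (c ` U \<union> d ` U))"
  have "card Fam = 2 * n + 1" using c3 cLU \<epsilon>notin finL finU Fam_def by simp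
  moreover have "Fam \<subseteq> S" using aS bS cS dS \<epsilon>S Fam_def by blast
  ultimately have "2 * n + 1 \<le> card S" using card_mono[OF finS] by metis
  then show False using card by simp
qed

end

theorem lemma2p3:
  fixes n :: nat and S :: "(nat \<rightharpoonup> nat) set"
  assumes "n \<ge> 2"
    and "S \<subseteq> sym_inv n - sym_grp n"
    and "is_subsemigroup S"
    and "semitransitive n S"
    and "card S \<le> 2 * n"
  shows "\<forall>e\<in>S. idempotent e \<longrightarrow>
           (\<forall>B\<in>trans_blocks n S. dom e \<inter> B = {} \<or> B \<subseteq> dom e)"
proof (intro ballI impI)
  have Ssub: "S \<subseteq> sym_inv n" using assms(2) by blast
  fix e B assume eS: "e \<in> S" and eid: "idempotent e" and BT: "B \<in> trans_blocks n S"
  show "dom e \<inter> B = {} \<or> B \<subseteq> dom e"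
  proof (rule ccontr)
    assume nt: "\<not> (dom e \<inter> B = {} \<or> B \<subseteq> dom e)"
    then obtain p q where p: "p \<in> dom e" "p \<in> B" and q: "q \<in> B" "q \<notin> dom e" by blast
    obtain x0 where B: "B = {y\<in>{1..n}. reach S x0 y \<and> reach S y x0}"
      using BT unfolding trans_blocks_def by blast
    have "reach S p q" using reach_trans[OF Ssub assms(3) assms(4)] p q B by blast
    moreover have "reach S q p" using reach_trans[OF Ssub assms(3) assms(4)] p q B by blast
    ultimately have "splitp S e p q" unfolding splitp_def using eS eid p q by blast
    then show False using no_split[OF Ssub assms(3) assms(4) assms(5)] by blast
  qed
qed

end
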